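(* Let $N\ge3$ and let $V\colon\mathbb{R}^N\to\mathbb{R}$ be continuous with $\inf_{\mathbb{R}^N}V>0$. Suppose that there exist positive constants $c_1,c_2,m$ and a sequence $\{x_n\}_n$ in $\mathbb{R}^N$ such that $V(x_n)\to+\infty$ and \[ c_1V(x_n)\le V(x)\le c_2V(x_n)\quad\text{for all } x\in B_{m/\sqrt{V(x_n)}}(x_n)\text{ and all }n . \] Then $H^1_V(\mathbb{R}^N)\setminus L^\tau_V(\mathbb{R}^N)\neq\emptyset$ for every $\tau>2$.
   Context: $H^1_V(\mathbb{R}^N)$ is the completion of $C_0^\infty(\mathbb{R}^N)$ with respect to the norm $\|u\|_V=\left(\int_{\mathbb{R}^N}(|\nabla u|^2+V(x)|u|^2)\,dx\right)^{1/2}$. $L^\tau_V(\mathbb{R}^N)$ is the space of measurable $u$ with $\int_{\mathbb{R}^N}V(x)|u|^\tau dx<+\infty$. $B_r(x)$ denotes the open ball of radius $r$ centered at $x$. *)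

theory Defs
  imports "HOL-Analysis.Analysis"
begin

fun iter_pd :: "'a::euclidean_space list \<Rightarrow> ('a \<Rightarrow> real) \<Rightarrow> ('a \<Rightarrow> real)" where
  "iter_pd [] f = f"
| "iter_pd (i # is) f = (\<lambda>x. frechet_derivative (iter_pd is f) (at x) i)"

definition smooth_fun :: "('a::euclidean_space \<Rightarrow> real) \<Rightarrow> bool" where
  "smooth_fun f \<longleftrightarrow> (\<forall>is. set is \<subseteq> Basis \<longrightarrow>
      iter_pd is f differentiable_on UNIV \<and> continuous_on UNIV (iter_pd is f))"

definition Cc_inf :: "('a::euclidean_space \<Rightarrow> real) set" where
  "Cc_inf = {f. smooth_fun f \<and> compact (closure {x. f x \<noteq> 0})}"

definition grad_sq :: "('a::euclidean_space \<Rightarrow> real) \<Rightarrow> 'a \<Rightarrow> real" where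
  "grad_sq f x = (\<Sum>i\<in>Basis. (frechet_derivative f (at x) i)\<^sup>2)"

definition normV_sq :: "('a::euclidean_space \<Rightarrow> real) \<Rightarrow> ('a \<Rightarrow> real) \<Rightarrow> ennreal" where
  "normV_sq V f = (\<integral>\<^sup>+ x. ennreal (grad_sq f x + V x * (f x)\<^sup>2) \<partial>lebesgue)"

text \<open>Concrete realization of the completion H^1_V: functions u that are the weighted-L^2 limit
  of a sequence of test functions which is Cauchy in the norm ||.||_V.\<close>
definition H1V :: "('a::euclidean_space \<Rightarrow> real) \<Rightarrow> ('a \<Rightarrow> real) set" where
  "H1V V = {u. u \<in> borel_measurable lebesgue \<and>
     (\<exists>\<phi>::nat \<Rightarrow> 'a \<Rightarrow> real. (\<forall>k. \<phi> k \<in> Cc_inf) \<and>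
        (\<forall>e>0. \<exists>K. \<forall>k\<ge>K. \<forall>l\<ge>K. normV_sq V (\<lambda>x. \<phi> k x - \<phi> l x) < ennreal e) \<and>
        ((\<lambda>k. \<integral>\<^sup>+ x. ennreal (V x * (\<phi> k x - u x)\<^sup>2) \<partial>lebesgue) \<longlonglongrightarrow> 0))}"

definition LV :: "('a::euclidean_space \<Rightarrow> real) \<Rightarrow> real \<Rightarrow> ('a \<Rightarrow> real) set" where
  "LV V \<tau> = {u. u \<in> borel_measurable lebesgue \<and>
     (\<integral>\<^sup>+ x. ennreal (V x * \<bar>u x\<bar> powr \<tau>) \<partial>lebesgue) < \<infinity>}"

end

theory Submission
  imports Defs "HOL-Computational_Algebra.Polynomial"
begin


definition G :: "real poly \<Rightarrow> real \<Rightarrow> real" where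
  "G p t = (if t > 0 then poly p (inverse t) * exp (- inverse t) else 0)"

definition Qp :: "real poly \<Rightarrow> real poly" where
  "Qp p = [:0,0,1:] * (p - pderiv p)"

lemma poly_exp_lim: "((\<lambda>s. poly (p::real poly) s * exp (- s)) \<longlongrightarrow> 0) at_top"
proof -
  have "((\<lambda>s. \<Sum>i\<le>degree p. coeff p i * (s ^ i / exp s)) \<longlongrightarrow> 0) at_top"
    by (intro tendsto_null_sum tendsto_mult_right_zero tendsto_power_div_exp_0)
  moreover have "(\<lambda>s. poly p s * exp (- s)) = (\<lambda>s. \<Sum>i\<le>degree p. coeff p i * (s ^ i / exp s))"
    by (auto simp: poly_altdef sum_distrib_right exp_minus sum_divide_distrib field_simps)
  ultimately show ?thesis by simp
qed

lemma G_lim0: "((\<lambda>t. poly (p::real poly) (inverse t) * exp (- inverse t)) \<longlongrightarrow> 0) (at_right 0)"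
  by (rule filterlim_compose[OF poly_exp_lim filterlim_inverse_at_top_right])

lemma G_deriv_pos:
  assumes "t > 0"
  shows "(G p has_real_derivative G (Qp p) t) (at t)"
proof -
  have "((\<lambda>t. poly p (inverse t) * exp (- inverse t)) has_real_derivative
     (poly (pderiv p) (inverse t) * (- inverse (t^2)) * exp (- inverse t) +
      poly p (inverse t) * (exp (- inverse t) * inverse (t^2)))) (at t)"
    using assms
    by (auto intro!: derivative_eq_intros simp: power2_eq_square field_simps)
  moreover have "poly (pderiv p) (inverse t) * (- inverse (t^2)) * exp (- inverse t) +
      poly p (inverse t) * (exp (- inverse t) * inverse (t^2)) = G (Qp p) t"
    using assms by (simp add: G_def Qp_def power2_eq_square field_simps)
  ultimately have d: "((\<lambda>t. poly p (inverse t) * exp (- inverse t)) has_real_derivative G (Qp p) t) (at t)"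
    by simp
  show ?thesis
    apply (rule has_field_derivative_transform_within_open[OF d, of "{0<..}"])
    using assms by (auto simp: G_def)
qed

lemma G_deriv_neg:
  assumes "t < 0"
  shows "(G p has_real_derivative G (Qp p) t) (at t)"
proof -
  have d: "((\<lambda>t. 0) has_real_derivative G (Qp p) t) (at t)" using assms by (simp add: G_def)
  show ?thesis
    apply (rule has_field_derivative_transform_within_open[OF d, of "{..<0}"])
    using assms by (auto simp: G_def)
qed

lemma G_deriv_0: "(G p has_real_derivative G (Qp p) 0) (at 0)"
proof -
  have "((\<lambda>h. (G p (0 + h) - G p 0) / h) \<longlongrightarrow> 0) (at 0)"
  proof (rule filterlim_split_at)
    have "\<forall>\<^sub>F h in at_left (0::real). 0 = (G p (0 + h) - G p 0) / h"
      by (auto simp: G_def eventually_at_left_field intro: exI[of _ "-1"])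
    then show "((\<lambda>h. (G p (0 + h) - G p 0) / h) \<longlongrightarrow> 0) (at_left 0)"
      by (rule Lim_transform_eventually[OF tendsto_const])
    have "\<forall>\<^sub>F h in at_right (0::real). poly ([:0,1:] * p) (inverse h) * exp (- inverse h) = (G p (0 + h) - G p 0) / h"
      by (auto simp: G_def eventually_at_right_field field_simps intro: exI[of _ 1])
    then show "((\<lambda>h. (G p (0 + h) - G p 0) / h) \<longlongrightarrow> 0) (at_right 0)"
      by (rule Lim_transform_eventually[OF G_lim0])
  qed
  then show ?thesis by (simp add: has_field_derivative_iff G_def)
qed

lemma G_deriv: "(G p has_real_derivative G (Qp p) t) (at t)"
  using G_deriv_0 G_deriv_pos G_deriv_neg by (cases "t > 0"; cases "t < 0") auto

lemma deriv_G: "deriv (G p) = G (Qp p)"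
  using G_deriv DERIV_imp_deriv by blast

definition smooth1 :: "(real \<Rightarrow> real) \<Rightarrow> bool" where
  "smooth1 h \<longleftrightarrow> (\<forall>k x. (deriv ^^ k) h differentiable (at x))"

lemma smooth1_deriv: "smooth1 h \<Longrightarrow> smooth1 (deriv h)"
  unfolding smooth1_def by (metis funpow_Suc_right o_apply)

lemma funpow_deriv_G: "(deriv ^^ k) (G p) = G ((Qp ^^ k) p)"
  by (induction k) (auto simp: deriv_G)

lemma smooth1_G: "smooth1 (G p)"
  unfolding smooth1_def funpow_deriv_G
  using G_deriv real_differentiable_def by blast


inductive_set SC :: "('a::euclidean_space \<Rightarrow> real) set" where
  SC_const: "(\<lambda>x. c) \<in> SC"
| SC_lin: "(\<lambda>x. x \<bullet> b) \<in> SC"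
| SC_sq: "(\<lambda>x. (x - c) \<bullet> (x - c)) \<in> SC"
| SC_add: "f \<in> SC \<Longrightarrow> g \<in> SC \<Longrightarrow> (\<lambda>x. f x + g x) \<in> SC"
| SC_mult: "f \<in> SC \<Longrightarrow> g \<in> SC \<Longrightarrow> (\<lambda>x. f x * g x) \<in> SC"
| SC_comp: "smooth1 h \<Longrightarrow> f \<in> SC \<Longrightarrow> (\<lambda>x. h (f x)) \<in> SC"

lemma SC_has_deriv:
  assumes "f \<in> SC"
  shows "\<exists>f'. (\<forall>x. (f has_derivative f' x) (at x)) \<and> (\<forall>i. (\<lambda>x. f' x i) \<in> SC)"
  using assms
proof induction
  case (SC_const c)
  show ?case by (rule exI[of _ "\<lambda>x h. 0"]) (auto intro: SC.SC_const)
next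
  case (SC_lin b)
  show ?case
  proof (rule exI[of _ "\<lambda>x h. h \<bullet> b"], intro conjI allI)
    fix x show "((\<lambda>x. x \<bullet> b) has_derivative (\<lambda>h. h \<bullet> b)) (at x)"
      by (rule bounded_linear_imp_has_derivative) (rule bounded_linear_inner_left)
  next
    fix i show "(\<lambda>x::'a. i \<bullet> b) \<in> SC" by (rule SC.SC_const)
  qed
next
  case (SC_sq c)
  show ?case
  proof (rule exI[of _ "\<lambda>x h. (x - c) \<bullet> h + h \<bullet> (x - c)"], intro conjI allI)
    fix x show "((\<lambda>x. (x - c) \<bullet> (x - c)) has_derivative (\<lambda>h. (x - c) \<bullet> h + h \<bullet> (x - c))) (at x)"
    proof -
      have d: "((\<lambda>x. x - c) has_derivative (\<lambda>h. h)) (at x)"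
        using has_derivative_diff[OF has_derivative_ident has_derivative_const, of c "at x"] by simp
      show ?thesis using has_derivative_inner[OF d d] by simp
    qed
  next
    fix i :: 'a
    have "(\<lambda>x. x \<bullet> (2 *\<^sub>R i) + (- 2 * (c \<bullet> i))) \<in> SC"
      by (intro SC.SC_add SC.SC_lin SC.SC_const)
    moreover have "(\<lambda>x. x \<bullet> (2 *\<^sub>R i) + (- 2 * (c \<bullet> i))) = (\<lambda>x. (x - c) \<bullet> i + i \<bullet> (x - c))"
      by (auto simp: inner_diff_left inner_diff_right inner_commute)
    ultimately show "(\<lambda>x. (x - c) \<bullet> i + i \<bullet> (x - c)) \<in> SC" by simp
  qed
next
  case (SC_add f g)
  then obtain f' g' where f: "\<forall>x. (f has_derivative f' x) (at x)" "\<forall>i. (\<lambda>x. f' x i) \<in> SC"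
    and g: "\<forall>x. (g has_derivative g' x) (at x)" "\<forall>i. (\<lambda>x. g' x i) \<in> SC" by blast
  show ?case
  proof (rule exI[of _ "\<lambda>x h. f' x h + g' x h"], intro conjI allI)
    fix x show "((\<lambda>x. f x + g x) has_derivative (\<lambda>h. f' x h + g' x h)) (at x)"
      using f(1) g(1) by (intro has_derivative_add) auto
  next
    fix i show "(\<lambda>x. f' x i + g' x i) \<in> SC" using f(2) g(2) by (intro SC.SC_add[of "\<lambda>x. f' x i"]) auto
  qed
next
  case (SC_mult f g)
  then obtain f' g' where f: "\<forall>x. (f has_derivative f' x) (at x)" "\<forall>i. (\<lambda>x. f' x i) \<in> SC"
    and g: "\<forall>x. (g has_derivative g' x) (at x)" "\<forall>i. (\<lambda>x. g' x i) \<in> SC" by blast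
  show ?case
  proof (rule exI[of _ "\<lambda>x h. f x * g' x h + f' x h * g x"], intro conjI allI)
    fix x show "((\<lambda>x. f x * g x) has_derivative (\<lambda>h. f x * g' x h + f' x h * g x)) (at x)"
      using f(1) g(1) by (intro has_derivative_mult) auto
  next
    fix i show "(\<lambda>x. f x * g' x i + f' x i * g x) \<in> SC" using f(2) g(2) SC_mult.hyps
      by (intro SC.SC_add[OF SC.SC_mult SC.SC_mult]) auto
  qed
next
  case (SC_comp h f)
  then obtain f' where f: "\<forall>x. (f has_derivative f' x) (at x)" "\<forall>i. (\<lambda>x. f' x i) \<in> SC" by blast
  have hd: "(h has_real_derivative deriv h y) (at y)" for y
    using SC_comp(1) unfolding smooth1_def
    by (metis DERIV_deriv_iff_real_differentiable funpow_0)
  show ?case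
  proof (rule exI[of _ "\<lambda>x v. deriv h (f x) * f' x v"], intro conjI allI)
    fix x
    show "((\<lambda>x. h (f x)) has_derivative (\<lambda>v. deriv h (f x) * f' x v)) (at x)"
      using has_derivative_compose[OF f(1)[rule_format, of x] hd[of "f x", unfolded has_field_derivative_def]]
      by (simp add: o_def mult.commute)
  next
    fix i
    show "(\<lambda>x. deriv h (f x) * f' x i) \<in> SC"
      by (rule SC.SC_mult[OF SC.SC_comp[OF smooth1_deriv[OF SC_comp.hyps(1)] SC_comp.hyps(2)] f(2)[rule_format]])
  qed
qed

lemma SC_differentiable: "f \<in> SC \<Longrightarrow> f differentiable (at x)"
  unfolding differentiable_def using SC_has_deriv by metis

lemma SC_frechet: "f \<in> SC \<Longrightarrow> (f has_derivative frechet_derivative f (at x)) (at x)"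
  by (rule frechet_derivative_works[THEN iffD1, OF SC_differentiable])

lemma SC_partial: "f \<in> SC \<Longrightarrow> (\<lambda>x. frechet_derivative f (at x) i) \<in> SC"
proof -
  assume "f \<in> SC"
  then obtain f' where f: "\<forall>x. (f has_derivative f' x) (at x)" "\<forall>i. (\<lambda>x. f' x i) \<in> SC"
    using SC_has_deriv by blast
  have "(\<lambda>x. frechet_derivative f (at x) i) = (\<lambda>x. f' x i)"
    using f(1) frechet_derivative_at by metis
  then show ?thesis using f(2) by simp
qed

lemma SC_continuous: "f \<in> SC \<Longrightarrow> continuous_on UNIV f"
  unfolding continuous_on_eq_continuous_at[OF open_UNIV]
  using SC_differentiable differentiable_imp_continuous_within by blast

lemma SC_iter: "f \<in> SC \<Longrightarrow> iter_pd is f \<in> SC"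
proof (induction "is")
  case Nil then show ?case by simp
next
  case (Cons i "is") then show ?case using SC_partial[of "iter_pd is f" i] by simp
qed

lemma SC_smooth: "f \<in> SC \<Longrightarrow> smooth_fun f"
  unfolding smooth_fun_def differentiable_on_def
proof (intro allI impI conjI ballI)
  fix "is" x assume "f \<in> SC"
  then have "iter_pd is f \<in> SC" by (rule SC_iter)
  then show "iter_pd is f differentiable at x within UNIV" "continuous_on UNIV (iter_pd is f)"
    using SC_differentiable SC_continuous by auto
qed

lemma SC_sum: "finite F \<Longrightarrow> (\<forall>j\<in>F. f j \<in> SC) \<Longrightarrow> (\<lambda>x. \<Sum>j\<in>F. f j x) \<in> SC"
proof (induction F rule: finite_induct)
  case empty then show ?case using SC.SC_const[of 0] by simp
next
  case (insert j F) then show ?case using SC.SC_add[of "f j" "\<lambda>x. \<Sum>j\<in>F. f j x"] by simp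
qed

lemma SC_grad_cont: "f \<in> SC \<Longrightarrow> continuous_on UNIV (grad_sq f)"
proof -
  assume f: "f \<in> SC"
  have "continuous_on UNIV (\<lambda>x. \<Sum>i\<in>Basis. (frechet_derivative f (at x) i)\<^sup>2)"
    by (intro continuous_on_sum continuous_on_power SC_continuous[OF SC_partial[OF f]])
  then show ?thesis unfolding grad_sq_def[abs_def] .
qed


lemma cont_meas: "continuous_on UNIV (f::'a::euclidean_space \<Rightarrow> real) \<Longrightarrow> f \<in> borel_measurable lebesgue"
  using borel_measurable_continuous_onI measurable_completion measurable_lborel2 by blast

lemma CS_weighted:
  fixes b w :: "nat \<Rightarrow> real"
  assumes "\<forall>j\<in>F. w j > 0"
  shows "(\<Sum>j\<in>F. b j)\<^sup>2 \<le> (\<Sum>j\<in>F. w j) * (\<Sum>j\<in>F. (b j)\<^sup>2 / w j)"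
proof -
  have "(\<Sum>j\<in>F. sqrt (w j) * (b j / sqrt (w j)))\<^sup>2 \<le> (\<Sum>j\<in>F. (sqrt (w j))\<^sup>2) * (\<Sum>j\<in>F. (b j / sqrt (w j))\<^sup>2)"
    by (rule Cauchy_Schwarz_ineq_sum)
  moreover have "(\<Sum>j\<in>F. sqrt (w j) * (b j / sqrt (w j))) = (\<Sum>j\<in>F. b j)"
    using assms by (intro sum.cong) auto
  moreover have "(\<Sum>j\<in>F. (sqrt (w j))\<^sup>2) = (\<Sum>j\<in>F. w j)"
    using assms by (intro sum.cong) auto
  moreover have "(\<Sum>j\<in>F. (b j / sqrt (w j))\<^sup>2) = (\<Sum>j\<in>F. (b j)\<^sup>2 / w j)"
    using assms by (intro sum.cong) (auto simp: power_divide)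
  ultimately show ?thesis by simp
qed

lemma grad_sq_nonneg: "grad_sq f y \<ge> 0"
  unfolding grad_sq_def by (intro sum_nonneg) auto

lemma normV_sum:
  fixes V :: "'a::euclidean_space \<Rightarrow> real" and f :: "nat \<Rightarrow> 'a \<Rightarrow> real" and w :: "nat \<Rightarrow> real"
  assumes F: "finite F" and fS: "\<forall>j\<in>F. f j \<in> SC" and w: "\<forall>j\<in>F. w j > 0" and s: "\<sigma>\<^sup>2 = 1"
    and Vc: "continuous_on UNIV V" and Vp: "\<forall>y. V y \<ge> 0"
  shows "normV_sq V (\<lambda>y. \<sigma> * (\<Sum>j\<in>F. f j y)) \<le> ennreal (\<Sum>j\<in>F. w j) * (\<Sum>j\<in>F. ennreal (1 / w j) * normV_sq V (f j))"
proof -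
  let ?W = "\<Sum>j\<in>F. w j"
  have Wnn: "?W \<ge> 0" using w by (intro sum_nonneg) auto
  define I where "I j y = grad_sq (f j) y + V y * (f j y)\<^sup>2" for j y
  have Inn: "I j y \<ge> 0" for j y
    unfolding I_def using grad_sq_nonneg[of "f j" y] Vp by auto
  have Imeas: "(\<lambda>y. I j y) \<in> borel_measurable lebesgue" if "j \<in> F" for j
    unfolding I_def using fS that
    by (intro cont_meas continuous_intros SC_grad_cont SC_continuous Vc) auto
  have der: "((\<lambda>y. \<sigma> * (\<Sum>j\<in>F. f j y)) has_derivative (\<lambda>v. \<sigma> * (\<Sum>j\<in>F. frechet_derivative (f j) (at y) v))) (at y)" for y
    using fS by (intro has_derivative_mult_right has_derivative_sum SC_frechet) auto
  have fd: "frechet_derivative (\<lambda>y. \<sigma> * (\<Sum>j\<in>F. f j y)) (at y) = (\<lambda>v. \<sigma> * (\<Sum>j\<in>F. frechet_derivative (f j) (at y) v))" for y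
    using der frechet_derivative_at by metis
  have pt: "grad_sq (\<lambda>y. \<sigma> * (\<Sum>j\<in>F. f j y)) y + V y * (\<sigma> * (\<Sum>j\<in>F. f j y))\<^sup>2
      \<le> ?W * (\<Sum>j\<in>F. (1 / w j) * I j y)" for y
  proof -
    have sq: "(\<sigma> * x)\<^sup>2 = x\<^sup>2" for x :: real using s by (simp add: power_mult_distrib)
    have "grad_sq (\<lambda>y. \<sigma> * (\<Sum>j\<in>F. f j y)) y = (\<Sum>i\<in>Basis. (\<Sum>j\<in>F. frechet_derivative (f j) (at y) i)\<^sup>2)"
      unfolding grad_sq_def fd sq ..
    also have "\<dots> \<le> (\<Sum>i\<in>Basis. ?W * (\<Sum>j\<in>F. (frechet_derivative (f j) (at y) i)\<^sup>2 / w j))"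
      by (intro sum_mono CS_weighted w)
    also have "\<dots> = ?W * (\<Sum>j\<in>F. (1 / w j) * grad_sq (f j) y)"
      unfolding grad_sq_def sum_distrib_left
      by (subst sum.swap) (simp add: sum_distrib_left sum_divide_distrib)
    finally have g: "grad_sq (\<lambda>y. \<sigma> * (\<Sum>j\<in>F. f j y)) y \<le> ?W * (\<Sum>j\<in>F. (1 / w j) * grad_sq (f j) y)" .
    have "V y * (\<sigma> * (\<Sum>j\<in>F. f j y))\<^sup>2 = V y * (\<Sum>j\<in>F. f j y)\<^sup>2" by (simp add: sq)
    also have "\<dots> \<le> V y * (?W * (\<Sum>j\<in>F. (f j y)\<^sup>2 / w j))"
      by (intro mult_left_mono CS_weighted w Vp[rule_format])
    also have "\<dots> = ?W * (\<Sum>j\<in>F. (1 / w j) * (V y * (f j y)\<^sup>2))"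
      by (simp add: sum_distrib_left mult_ac)
    finally have v: "V y * (\<sigma> * (\<Sum>j\<in>F. f j y))\<^sup>2 \<le> ?W * (\<Sum>j\<in>F. (1 / w j) * (V y * (f j y)\<^sup>2))" .
    show ?thesis using add_mono[OF g v]
      by (simp add: I_def distrib_left sum.distrib)
  qed
  have "normV_sq V (\<lambda>y. \<sigma> * (\<Sum>j\<in>F. f j y)) \<le> (\<integral>\<^sup>+ y. ennreal (?W * (\<Sum>j\<in>F. (1 / w j) * I j y)) \<partial>lebesgue)"
    unfolding normV_sq_def by (intro nn_integral_mono ennreal_leI pt)
  also have "\<dots> = (\<integral>\<^sup>+ y. ennreal ?W * (\<Sum>j\<in>F. ennreal (1 / w j) * ennreal (I j y)) \<partial>lebesgue)"
  proof (intro nn_integral_cong)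
    fix y
    have "(\<Sum>j\<in>F. ennreal (1 / w j) * ennreal (I j y)) = (\<Sum>j\<in>F. ennreal ((1 / w j) * I j y))"
    proof (intro sum.cong refl)
      fix j assume "j \<in> F"
      then have "1 / w j \<ge> 0" using w by auto
      then show "ennreal (1 / w j) * ennreal (I j y) = ennreal ((1 / w j) * I j y)"
        by (rule ennreal_mult[symmetric, OF _ Inn])
    qed
    also have "\<dots> = ennreal (\<Sum>j\<in>F. (1 / w j) * I j y)"
      using w Inn by (intro sum_ennreal) auto
    finally have "(\<Sum>j\<in>F. ennreal (1 / w j) * ennreal (I j y)) = ennreal (\<Sum>j\<in>F. (1 / w j) * I j y)" .
    show "ennreal (?W * (\<Sum>j\<in>F. (1 / w j) * I j y)) = ennreal ?W * (\<Sum>j\<in>F. ennreal (1 / w j) * ennreal (I j y))"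
    proof -
      have "(\<Sum>j\<in>F. (1 / w j) * I j y) \<ge> 0" using w Inn by (intro sum_nonneg) auto
      then show ?thesis using Wnn \<open>(\<Sum>j\<in>F. ennreal (1 / w j) * ennreal (I j y)) = ennreal (\<Sum>j\<in>F. (1 / w j) * I j y)\<close>
        by (metis ennreal_mult)
    qed
  qed
  also have "\<dots> = ennreal ?W * (\<Sum>j\<in>F. ennreal (1 / w j) * (\<integral>\<^sup>+ y. ennreal (I j y) \<partial>lebesgue))"
    using Imeas by (simp add: nn_integral_cmult nn_integral_sum)
  also have "\<dots> = ennreal ?W * (\<Sum>j\<in>F. ennreal (1 / w j) * normV_sq V (f j))"
    unfolding normV_sq_def I_def ..
  finally show ?thesis .
qed


definition gb :: "real \<Rightarrow> real" where "gb = G 1"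
definition gd :: "real \<Rightarrow> real" where "gd = G (Qp 1)"

definition phi :: "'a::euclidean_space \<Rightarrow> real \<Rightarrow> 'a \<Rightarrow> real" where
  "phi c r y = 1/4 + (- inverse (r^2)) * ((y - c) \<bullet> (y - c))"

definition psi :: "'a::euclidean_space \<Rightarrow> real \<Rightarrow> 'a \<Rightarrow> real" where
  "psi c r y = gb (phi c r y)"

lemma gb_eq: "gb t = (if t > 0 then exp (- inverse t) else 0)"
  by (simp add: gb_def G_def)

lemma gd_eq: "gd t = (if t > 0 then (inverse t)\<^sup>2 * exp (- inverse t) else 0)"
  by (simp add: gd_def G_def Qp_def power2_eq_square)

lemma gb_deriv: "(gb has_real_derivative gd t) (at t)"
  unfolding gb_def gd_def by (rule G_deriv)

lemma gb_bounds: "0 \<le> gb t" "gb t \<le> 1"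
  by (auto simp: gb_eq)

lemma gd_bounds: "0 \<le> gd t" "gd t \<le> 2"
proof -
  show "0 \<le> gd t" by (simp add: gd_eq)
  show "gd t \<le> 2"
  proof (cases "t > 0")
    case True
    define s where "s = inverse t"
    have s: "s > 0" using True by (simp add: s_def)
    have "1 + s + s\<^sup>2 / 2 \<le> exp s" using s by (intro exp_lower_Taylor_quadratic) simp
    then have "s\<^sup>2 \<le> 2 * exp s" using s by simp
    then have "s\<^sup>2 / exp s \<le> 2" by (simp add: divide_le_eq)
    then have "s\<^sup>2 * exp (- s) \<le> 2" by (simp add: exp_minus divide_inverse)
    then show ?thesis using True by (simp add: gd_eq s_def)
  qed (simp add: gd_eq)
qed

lemma smooth1_gb: "smooth1 gb"
  unfolding gb_def by (rule smooth1_G)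

lemma psi_SC: "(\<lambda>y. a * psi c r y) \<in> SC"
  unfolding psi_def phi_def
  by (rule SC_mult[OF SC_const SC_comp[OF smooth1_gb SC_add[OF SC_const SC_mult[OF SC_const SC_sq]]]])

lemma phi_deriv: "(phi c r has_derivative (\<lambda>v. (- inverse (r^2)) * ((y - c) \<bullet> v + v \<bullet> (y - c)))) (at y)"
proof -
  have d: "((\<lambda>x. x - c) has_derivative (\<lambda>h. h)) (at y)"
    using has_derivative_diff[OF has_derivative_ident has_derivative_const, of c "at y"] by simp
  have "((\<lambda>y. (y - c) \<bullet> (y - c)) has_derivative (\<lambda>v. (y - c) \<bullet> v + v \<bullet> (y - c))) (at y)"
    using has_derivative_inner[OF d d] by simp
  then have "((\<lambda>y. 1/4 + (- inverse (r^2)) * ((y - c) \<bullet> (y - c))) has_derivative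
      (\<lambda>v. 0 + (- inverse (r^2)) * ((y - c) \<bullet> v + v \<bullet> (y - c)))) (at y)"
    by (intro has_derivative_add has_derivative_const has_derivative_mult_right)
  then show ?thesis unfolding phi_def[abs_def] by simp
qed

lemma apsi_deriv: "((\<lambda>y. a * psi c r y) has_derivative
   (\<lambda>v. a * (gd (phi c r y) * ((- inverse (r^2)) * ((y - c) \<bullet> v + v \<bullet> (y - c)))))) (at y)"
proof -
  have "((\<lambda>y. gb (phi c r y)) has_derivative (\<lambda>v. gd (phi c r y) * ((- inverse (r^2)) * ((y - c) \<bullet> v + v \<bullet> (y - c))))) (at y)"
    using has_derivative_compose[OF phi_deriv gb_deriv[unfolded has_field_derivative_def]]
    by (simp add: o_def)
  then show ?thesis unfolding psi_def by (rule has_derivative_mult_right)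
qed

lemma sum_Basis_sq: "(\<Sum>i\<in>Basis. (x \<bullet> i)\<^sup>2) = x \<bullet> (x::'a::euclidean_space)"
  by (subst (2) euclidean_inner) (simp add: power2_eq_square)

lemma apsi_grad: "grad_sq (\<lambda>y. a * psi c r y) y =
   a\<^sup>2 * (gd (phi c r y))\<^sup>2 * (4 * inverse (r^2)^2) * ((y - c) \<bullet> (y - c))"
proof -
  have fd: "frechet_derivative (\<lambda>y. a * psi c r y) (at y) =
     (\<lambda>v. a * (gd (phi c r y) * ((- inverse (r^2)) * ((y - c) \<bullet> v + v \<bullet> (y - c)))))"
    by (rule frechet_derivative_at[OF apsi_deriv, symmetric])
  have e: "(a * (gd (phi c r y) * ((- inverse (r^2)) * ((y - c) \<bullet> i + i \<bullet> (y - c)))))\<^sup>2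
      = (a\<^sup>2 * (gd (phi c r y))\<^sup>2 * (4 * inverse (r^2)^2)) * ((y - c) \<bullet> i)\<^sup>2" for i
  proof -
    have "(y - c) \<bullet> i + i \<bullet> (y - c) = 2 * ((y - c) \<bullet> i)" by (simp add: inner_commute)
    then show ?thesis by (simp add: power_mult_distrib)
  qed
  have "grad_sq (\<lambda>y. a * psi c r y) y =
     (\<Sum>i\<in>Basis. (a\<^sup>2 * (gd (phi c r y))\<^sup>2 * (4 * inverse (r^2)^2)) * ((y - c) \<bullet> i)\<^sup>2)"
    unfolding grad_sq_def fd e ..
  also have "\<dots> = a\<^sup>2 * (gd (phi c r y))\<^sup>2 * (4 * inverse (r^2)^2) * ((y - c) \<bullet> (y - c))"
    by (simp only: sum_distrib_left[symmetric] sum_Basis_sq)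
  finally show ?thesis .
qed


lemma leb_cball: "s \<ge> 0 \<Longrightarrow> emeasure lebesgue (cball (c::'a::euclidean_space) s) = ennreal (unit_ball_vol (DIM('a)) * s ^ DIM('a))"
proof -
  assume s: "s \<ge> 0"
  have b: "cball c s \<in> sets lborel" by simp
  have "emeasure lebesgue (cball c s) = emeasure lborel (cball c s)"
    using b by simp
  also have "\<dots> = ennreal (unit_ball_vol (DIM('a)) * s ^ DIM('a))"
    using s by (rule emeasure_cball)
  finally show ?thesis .
qed

lemma cball_sq: "y \<in> cball c s \<longleftrightarrow> dist c y \<le> s" by simp

lemma inner_dist: "(y - c) \<bullet> (y - c) = (dist c y)\<^sup>2"
  by (simp add: dot_square_norm dist_norm norm_minus_commute)

lemma apsi_normV:
  fixes V :: "'a::euclidean_space \<Rightarrow> real"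
  assumes r: "r > 0" and Vp: "\<forall>y. V y \<ge> 0" and VK: "\<forall>y\<in>cball c (r/2). V y \<le> K" and K: "K \<ge> 0"
  shows "normV_sq V (\<lambda>y. a * psi c r y) \<le> ennreal ((4 * a\<^sup>2 / r\<^sup>2 + K * a\<^sup>2) * unit_ball_vol DIM('a) * (r/2) ^ DIM('a))"
proof -
  let ?C = "4 * a\<^sup>2 / r\<^sup>2 + K * a\<^sup>2"
  have Cnn: "?C \<ge> 0" using K by (intro add_nonneg_nonneg) auto
  have pt: "ennreal (grad_sq (\<lambda>y. a * psi c r y) y + V y * (a * psi c r y)\<^sup>2) \<le> ennreal ?C * indicator (cball c (r/2)) y" for y
  proof (cases "y \<in> cball c (r/2)")
    case True
    have d: "(y - c) \<bullet> (y - c) \<le> r\<^sup>2 / 4"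
    proof -
      have "dist c y \<le> r/2" using True by simp
      then have "(dist c y)\<^sup>2 \<le> (r/2)\<^sup>2" by (intro power_mono) auto
      then show ?thesis unfolding inner_dist by (simp add: power_divide)
    qed
    have gd4: "(gd (phi c r y))\<^sup>2 \<le> 4"
      using power_mono[OF gd_bounds(2) gd_bounds(1), of "phi c r y" 2] by simp
    have "grad_sq (\<lambda>y. a * psi c r y) y \<le> a\<^sup>2 * 4 * (4 * inverse (r^2)^2) * (r\<^sup>2 / 4)"
      unfolding apsi_grad
      by (intro mult_mono mult_left_mono gd4 d) (auto simp: inner_dist)
    also have "\<dots> = 4 * a\<^sup>2 / r\<^sup>2" using r by (simp add: field_simps power2_eq_square)
    finally have g: "grad_sq (\<lambda>y. a * psi c r y) y \<le> 4 * a\<^sup>2 / r\<^sup>2" .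
    have p1: "(psi c r y)\<^sup>2 \<le> 1"
      using power_mono[OF gb_bounds(2) gb_bounds(1), of "phi c r y" 2] by (simp add: psi_def)
    have "V y * (a * psi c r y)\<^sup>2 = V y * (a\<^sup>2 * (psi c r y)\<^sup>2)" by (simp add: power_mult_distrib)
    also have "\<dots> \<le> K * (a\<^sup>2 * 1)"
      using VK True Vp K by (intro mult_mono mult_left_mono p1) auto
    finally have v: "V y * (a * psi c r y)\<^sup>2 \<le> K * a\<^sup>2" by simp
    show ?thesis using True add_mono[OF g v] by (simp add: ennreal_leI)
  next
    case False
    then have "dist c y > r/2" by simp
    then have "(dist c y)\<^sup>2 > (r/2)\<^sup>2" using r by (intro power_strict_mono) auto
    then have "(y - c) \<bullet> (y - c) > r\<^sup>2 / 4" unfolding inner_dist by (simp add: power_divide)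
    then have "inverse (r^2) * ((y - c) \<bullet> (y - c)) > inverse (r^2) * (r\<^sup>2 / 4)"
      using r by (intro mult_strict_left_mono) auto
    then have "phi c r y < 0" using r by (simp add: phi_def)
    then have "gd (phi c r y) = 0" "psi c r y = 0" by (auto simp: gd_eq psi_def gb_eq)
    then show ?thesis by (simp add: apsi_grad)
  qed
  have "normV_sq V (\<lambda>y. a * psi c r y) \<le> (\<integral>\<^sup>+ y. ennreal ?C * indicator (cball c (r/2)) y \<partial>lebesgue)"
    unfolding normV_sq_def by (intro nn_integral_mono pt)
  also have "\<dots> = ennreal ?C * emeasure lebesgue (cball c (r/2))"
    by (intro nn_integral_cmult_indicator) simp
  also have "\<dots> = ennreal (?C * unit_ball_vol DIM('a) * (r/2) ^ DIM('a))"
  proof -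
    have m: "emeasure lebesgue (cball c (r/2)) = ennreal (unit_ball_vol DIM('a) * (r/2) ^ DIM('a))"
      using r by (intro leb_cball) auto
    have "unit_ball_vol DIM('a) * (r/2) ^ DIM('a) \<ge> 0" using r by simp
    then show ?thesis unfolding m using Cnn by (simp add: ennreal_mult[symmetric] mult.assoc)
  qed
  finally show ?thesis .
qed

lemma apsi_lower:
  fixes V :: "'a::euclidean_space \<Rightarrow> real"
  assumes r: "r > 0" and a: "a \<ge> 0" and tau: "\<tau> > 0" and L: "L \<ge> 0"
    and VL: "\<forall>y\<in>cball c (r/8). V y \<ge> L" and Vp: "\<forall>y. V y \<ge> 0"
  shows "ennreal (L * (a * exp (-5)) powr \<tau> * unit_ball_vol DIM('a) * (r/8) ^ DIM('a))
     \<le> (\<integral>\<^sup>+ y. ennreal (V y * \<bar>a * psi c r y\<bar> powr \<tau>) \<partial>lebesgue)"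
proof -
  let ?C = "L * (a * exp (-5)) powr \<tau>"
  have Cnn: "?C \<ge> 0" using L by simp
  have pt: "ennreal ?C * indicator (cball c (r/8)) y \<le> ennreal (V y * \<bar>a * psi c r y\<bar> powr \<tau>)" for y
  proof (cases "y \<in> cball c (r/8)")
    case True
    have d: "(y - c) \<bullet> (y - c) \<le> r\<^sup>2 / 64"
    proof -
      have "dist c y \<le> r/8" using True by simp
      then have "(dist c y)\<^sup>2 \<le> (r/8)\<^sup>2" by (intro power_mono) auto
      then show ?thesis unfolding inner_dist by (simp add: power_divide)
    qed
    then have "inverse (r^2) * ((y - c) \<bullet> (y - c)) \<le> inverse (r^2) * (r\<^sup>2 / 64)"
      using r by (intro mult_left_mono) auto
    then have ph: "phi c r y \<ge> 15/64" using r by (simp add: phi_def)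
    then have "inverse (phi c r y) \<le> inverse (15/64)" by (intro le_imp_inverse_le) auto
    then have "inverse (phi c r y) \<le> 5" by simp
    then have "exp (-5) \<le> psi c r y" using ph by (simp add: psi_def gb_eq)
    then have "a * exp (-5) \<le> a * psi c r y" using a by (rule mult_left_mono)
    then have "(a * exp (-5)) powr \<tau> \<le> \<bar>a * psi c r y\<bar> powr \<tau>"
      using a tau by (intro powr_mono2) auto
    then have "?C \<le> V y * \<bar>a * psi c r y\<bar> powr \<tau>"
      using VL True L Vp by (intro mult_mono) auto
    then show ?thesis using True by (simp add: ennreal_leI)
  next
    case False
    then show ?thesis by simp
  qed
  have "ennreal (?C * unit_ball_vol DIM('a) * (r/8) ^ DIM('a)) = ennreal ?C * emeasure lebesgue (cball c (r/8))"
  proof -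
    have m: "emeasure lebesgue (cball c (r/8)) = ennreal (unit_ball_vol DIM('a) * (r/8) ^ DIM('a))"
      using r by (intro leb_cball) auto
    have "unit_ball_vol DIM('a) * (r/8) ^ DIM('a) \<ge> 0" using r by simp
    then show ?thesis unfolding m using Cnn by (simp add: ennreal_mult[symmetric] mult.assoc)
  qed
  also have "\<dots> = (\<integral>\<^sup>+ y. ennreal ?C * indicator (cball c (r/8)) y \<partial>lebesgue)"
    by (intro nn_integral_cmult_indicator[symmetric]) simp
  also have "\<dots> \<le> (\<integral>\<^sup>+ y. ennreal (V y * \<bar>a * psi c r y\<bar> powr \<tau>) \<partial>lebesgue)"
    by (intro nn_integral_mono pt)
  finally show ?thesis .
qed


lemma geo_sum: "l \<le> k \<Longrightarrow> (\<Sum>j\<in>{l..<k}. (1/2::real)^j) = 2 * ((1/2)^l - (1/2)^k)"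
proof (induction k)
  case 0 then show ?case by simp
next
  case (Suc k)
  show ?case
  proof (cases "l = Suc k")
    case True then show ?thesis by simp
  next
    case False
    then have "l \<le> k" using Suc.prems by simp
    then have "{l..<Suc k} = insert k {l..<k}" by auto
    then have "(\<Sum>j\<in>{l..<Suc k}. (1/2::real)^j) = (1/2)^k + (\<Sum>j\<in>{l..<k}. (1/2::real)^j)" by simp
    also have "\<dots> = (1/2)^k + 2 * ((1/2)^l - (1/2)^k)" using Suc.IH \<open>l \<le> k\<close> by simp
    also have "\<dots> = 2 * ((1/2)^l - (1/2)^Suc k)" by simp
    finally show ?thesis .
  qed
qed

lemma sum_diff_ivl: "(l::nat) \<le> k \<Longrightarrow> (\<Sum>j<k. f j) - (\<Sum>j<l. f j) = (\<Sum>j\<in>{l..<k}. (f j :: real))"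
proof -
  assume "l \<le> k"
  then have "{..<k} = {..<l} \<union> {l..<k}" by auto
  moreover have "{..<l} \<inter> {l..<k} = {}" by auto
  ultimately have "(\<Sum>j<k. f j) = (\<Sum>j<l. f j) + (\<Sum>j\<in>{l..<k}. f j)"
    by (simp add: sum.union_disjoint)
  then show ?thesis by simp
qed

lemma normV_family:
  fixes V :: "'a::euclidean_space \<Rightarrow> real" and f :: "nat \<Rightarrow> 'a \<Rightarrow> real"
  assumes fS: "\<forall>j. f j \<in> SC" and fb: "\<forall>j. normV_sq V (f j) \<le> ennreal ((1/4)^j)"
    and Vc: "continuous_on UNIV V" and Vp: "\<forall>y. V y \<ge> 0" and lk: "l \<le> k" and s: "\<sigma>\<^sup>2 = 1"
  shows "normV_sq V (\<lambda>y. \<sigma> * (\<Sum>j\<in>{l..<k}. f j y)) \<le> ennreal (4 * (1/2)^l)"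
proof -
  define W where "W = (\<Sum>j\<in>{l..<k}. (1/2::real)^j)"
  have W: "W = 2 * ((1/2)^l - (1/2)^k)" unfolding W_def using lk by (rule geo_sum)
  have Wnn: "W \<ge> 0" unfolding W_def by (intro sum_nonneg) auto
  have Wl: "W \<le> 2 * (1/2)^l" using W by simp
  have "(1/2::real)^l \<le> 1" by (intro power_le_one) auto
  then have W2: "W \<le> 2" using Wl by linarith
  have "normV_sq V (\<lambda>y. \<sigma> * (\<Sum>j\<in>{l..<k}. f j y))
      \<le> ennreal W * (\<Sum>j\<in>{l..<k}. ennreal (1 / (1/2)^j) * normV_sq V (f j))"
    unfolding W_def using fS Vc Vp s by (intro normV_sum) auto
  also have "\<dots> \<le> ennreal W * (\<Sum>j\<in>{l..<k}. ennreal (1 / (1/2)^j) * ennreal ((1/4)^j))"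
    by (intro mult_left_mono sum_mono fb[rule_format]) auto
  also have "(\<Sum>j\<in>{l..<k}. ennreal (1 / (1/2)^j) * ennreal ((1/4)^j)) = ennreal W"
  proof -
    have "(\<Sum>j\<in>{l..<k}. ennreal (1 / (1/2)^j) * ennreal ((1/4)^j)) = (\<Sum>j\<in>{l..<k}. ennreal ((1/2::real)^j))"
    proof (intro sum.cong refl)
      fix j :: nat
      have "ennreal (1 / (1/2)^j) * ennreal ((1/4)^j) = ennreal (1 / (1/2)^j * (1/4)^j)"
        by (rule ennreal_mult[symmetric]) auto
      also have "1 / (1/2)^j * (1/4::real)^j = (1/2)^j"
        by (simp add: power_divide field_simps power_mult_distrib[symmetric])
      finally show "ennreal (1 / (1/2)^j) * ennreal ((1/4)^j) = ennreal ((1/2::real)^j)" .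
    qed
    also have "\<dots> = ennreal W" unfolding W_def by (rule sum_ennreal) auto
    finally show ?thesis .
  qed
  also have "ennreal W * ennreal W = ennreal (W * W)" using Wnn by (simp add: ennreal_mult)
  also have "W * W \<le> 2 * (2 * (1/2)^l)" using Wnn W2 Wl by (intro mult_mono) auto
  then have "ennreal (W * W) \<le> ennreal (4 * (1/2)^l)" by (intro ennreal_leI) simp
  finally show ?thesis .
qed


lemma main_construction:
  fixes V :: "'a::euclidean_space \<Rightarrow> real" and f :: "nat \<Rightarrow> 'a \<Rightarrow> real" and c :: "nat \<Rightarrow> 'a"
  assumes Vc: "continuous_on UNIV V" and Vp: "\<forall>y. V y \<ge> 0"
    and fS: "\<forall>k. f k \<in> SC" and fb: "\<forall>k. normV_sq V (f k) \<le> ennreal ((1/4)^k)"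
    and fnn: "\<forall>k y. f k y \<ge> 0"
    and fsupp: "\<forall>k y. f k y \<noteq> 0 \<longrightarrow> real k < norm y \<and> dist (c k) y < \<rho>"
    and flow: "\<forall>k. ennreal (real k) \<le> (\<integral>\<^sup>+ y. ennreal (V y * \<bar>f k y\<bar> powr \<tau>) \<partial>lebesgue)"
    and tau: "\<tau> > 0"
  shows "H1V V - LV V \<tau> \<noteq> {}"
proof -
  define S where "S = (\<lambda>K y. \<Sum>j<K. f j y)"
  have summ: "summable (\<lambda>j. f j y)" for y
  proof -
    have "(\<lambda>j. f j y) sums (\<Sum>j\<in>{..<nat \<lceil>norm y\<rceil>}. f j y)"
    proof (rule sums_finite)
      fix j assume "j \<notin> {..<nat \<lceil>norm y\<rceil>}"
      then have "real j \<ge> norm y" by (simp add: not_less nat_le_iff ceiling_le_iff)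
      then show "f j y = 0" using fsupp by force
    qed simp
    then show ?thesis by (rule sums_summable)
  qed
  define u where "u y = (\<Sum>j. f j y)" for y
  have Sconv: "(\<lambda>K. S K y) \<longlonglongrightarrow> u y" for y
    unfolding S_def u_def by (rule summable_LIMSEQ[OF summ])
  have SSC: "S K \<in> SC" for K
    unfolding S_def using SC_sum[of "{..<K}" f] fS by auto
  have Smeas: "S K \<in> borel_measurable lebesgue" for K
    by (intro cont_meas SC_continuous SSC)
  have umeas: "u \<in> borel_measurable lebesgue"
    by (rule borel_measurable_LIMSEQ_metric[OF Smeas Sconv])
  have Cc: "S K \<in> Cc_inf" for K
  proof -
    have "{y. S K y \<noteq> 0} \<subseteq> (\<Union>j\<in>{..<K}. ball (c j) \<rho>)"
    proof
      fix y assume "y \<in> {y. S K y \<noteq> 0}"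
      then have "(\<Sum>j<K. f j y) \<noteq> 0" by (simp add: S_def)
      then obtain j where "j < K" "f j y \<noteq> 0" by (meson lessThan_iff sum.neutral)
      then show "y \<in> (\<Union>j\<in>{..<K}. ball (c j) \<rho>)" using fsupp by force
    qed
    moreover have "bounded (\<Union>j\<in>{..<K}. ball (c j) \<rho>)" by (intro bounded_UN) auto
    ultimately have "bounded {y. S K y \<noteq> 0}" by (rule bounded_subset[rotated])
    then have "compact (closure {y. S K y \<noteq> 0})" by simp
    then show ?thesis unfolding Cc_inf_def using SC_smooth[OF SSC] by simp
  qed
  have diffb: "normV_sq V (\<lambda>y. S k y - S l y) \<le> ennreal (4 * (1/2)^(min k l))" for k l
  proof (cases "l \<le> k")
    case True
    have eq: "(\<lambda>y. S k y - S l y) = (\<lambda>y. 1 * (\<Sum>j\<in>{l..<k}. f j y))"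
      unfolding S_def using sum_diff_ivl[OF True] by simp
    have m: "min k l = l" using True by simp
    show ?thesis unfolding eq m by (rule normV_family[OF fS fb Vc Vp True]) simp
  next
    case False
    then have lk: "k \<le> l" by simp
    have eq: "(\<lambda>y. S k y - S l y) = (\<lambda>y. (-1) * (\<Sum>j\<in>{k..<l}. f j y))"
      unfolding S_def using sum_diff_ivl[OF lk] by (auto simp: algebra_simps)
    have m: "min k l = k" using lk by simp
    show ?thesis unfolding eq m by (rule normV_family[OF fS fb Vc Vp lk]) simp
  qed
  have Cauchy: "\<forall>e>0. \<exists>K. \<forall>k\<ge>K. \<forall>l\<ge>K. normV_sq V (\<lambda>y. S k y - S l y) < ennreal e"
  proof (intro allI impI)
    fix e :: real assume e: "e > 0"
    obtain K where K: "(1/2::real)^K < e/4" using real_arch_pow_inv[of "e/4" "1/2"] e by auto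
    show "\<exists>K. \<forall>k\<ge>K. \<forall>l\<ge>K. normV_sq V (\<lambda>y. S k y - S l y) < ennreal e"
    proof (intro exI allI impI)
      fix k l assume "K \<le> k" "K \<le> l"
      then have "(1/2::real)^(min k l) \<le> (1/2)^K" by (intro power_decreasing) auto
      then have "4 * (1/2::real)^(min k l) < e" using K by linarith
      then have "ennreal (4 * (1/2)^(min k l)) < ennreal e" using e by (subst ennreal_less_iff) auto
      then show "normV_sq V (\<lambda>y. S k y - S l y) < ennreal e" using diffb[of k l] by (rule le_less_trans[rotated])
    qed
  qed
  have L2b: "(\<integral>\<^sup>+ y. ennreal (V y * (S K y - u y)\<^sup>2) \<partial>lebesgue) \<le> ennreal (4 * (1/2)^K)" for K
  proof -
    have ptl: "(\<lambda>L. ennreal (V y * (S K y - S L y)\<^sup>2)) \<longlonglongrightarrow> ennreal (V y * (S K y - u y)\<^sup>2)" for y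
      by (intro tendsto_ennrealI tendsto_intros Sconv)
    have "(\<integral>\<^sup>+ y. ennreal (V y * (S K y - u y)\<^sup>2) \<partial>lebesgue)
        = (\<integral>\<^sup>+ y. liminf (\<lambda>L. ennreal (V y * (S K y - S L y)\<^sup>2)) \<partial>lebesgue)"
      by (intro nn_integral_cong lim_imp_Liminf[symmetric] ptl) simp
    also have "\<dots> \<le> liminf (\<lambda>L. \<integral>\<^sup>+ y. ennreal (V y * (S K y - S L y)\<^sup>2) \<partial>lebesgue)"
    proof (rule nn_integral_liminf)
      fix L
      have "(\<lambda>y. V y * (S K y - S L y)\<^sup>2) \<in> borel_measurable lebesgue"
        by (intro cont_meas continuous_intros Vc SC_continuous SSC)
      then show "(\<lambda>y. ennreal (V y * (S K y - S L y)\<^sup>2)) \<in> borel_measurable lebesgue" by simp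
    qed
    also have "\<dots> \<le> limsup (\<lambda>L. \<integral>\<^sup>+ y. ennreal (V y * (S K y - S L y)\<^sup>2) \<partial>lebesgue)"
      by (rule Liminf_le_Limsup) simp
    also have "\<dots> \<le> ennreal (4 * (1/2)^K)"
    proof (rule Limsup_bounded)
      show "\<forall>\<^sub>F L in sequentially. (\<integral>\<^sup>+ y. ennreal (V y * (S K y - S L y)\<^sup>2) \<partial>lebesgue) \<le> ennreal (4 * (1/2)^K)"
        unfolding eventually_sequentially
      proof (intro exI allI impI)
        fix L assume "K \<le> L"
        have "(\<integral>\<^sup>+ y. ennreal (V y * (S K y - S L y)\<^sup>2) \<partial>lebesgue) \<le> normV_sq V (\<lambda>y. S K y - S L y)"
          unfolding normV_sq_def
          by (intro nn_integral_mono ennreal_leI) (simp add: grad_sq_nonneg)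
        also have "\<dots> \<le> ennreal (4 * (1/2)^(min K L))" by (rule diffb)
        finally show "(\<integral>\<^sup>+ y. ennreal (V y * (S K y - S L y)\<^sup>2) \<partial>lebesgue) \<le> ennreal (4 * (1/2)^K)"
          using \<open>K \<le> L\<close> by (simp add: min_def)
      qed
    qed
    finally show ?thesis .
  qed
  have L2: "(\<lambda>K. \<integral>\<^sup>+ y. ennreal (V y * (S K y - u y)\<^sup>2) \<partial>lebesgue) \<longlonglongrightarrow> 0"
  proof (rule tendsto_sandwich[OF _ _ tendsto_const])
    show "\<forall>\<^sub>F K in sequentially. 0 \<le> (\<integral>\<^sup>+ y. ennreal (V y * (S K y - u y)\<^sup>2) \<partial>lebesgue)" by simp
    show "\<forall>\<^sub>F K in sequentially. (\<integral>\<^sup>+ y. ennreal (V y * (S K y - u y)\<^sup>2) \<partial>lebesgue) \<le> ennreal (4 * (1/2)^K)"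
      using L2b by simp
    have "(\<lambda>K. 4 * (1/2::real)^K) \<longlonglongrightarrow> 4 * 0"
      by (intro tendsto_mult tendsto_const LIMSEQ_power_zero) simp
    then have "(\<lambda>K. ennreal (4 * (1/2::real)^K)) \<longlonglongrightarrow> ennreal 0"
      by (intro tendsto_ennrealI) simp
    then show "(\<lambda>K. ennreal (4 * (1/2::real)^K)) \<longlonglongrightarrow> 0" by simp
  qed
  have uH: "u \<in> H1V V"
    unfolding H1V_def
  proof (intro CollectI conjI umeas exI[of _ S])
    show "\<forall>k. S k \<in> Cc_inf" using Cc by simp
    show "\<forall>e>0. \<exists>K. \<forall>k\<ge>K. \<forall>l\<ge>K. normV_sq V (\<lambda>x. S k x - S l x) < ennreal e" by (rule Cauchy)
    show "(\<lambda>k. \<integral>\<^sup>+ y. ennreal (V y * (S k y - u y)\<^sup>2) \<partial>lebesgue) \<longlonglongrightarrow> 0" by (rule L2)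
  qed
  have uL: "u \<notin> LV V \<tau>"
  proof
    assume "u \<in> LV V \<tau>"
    then have fin: "(\<integral>\<^sup>+ y. ennreal (V y * \<bar>u y\<bar> powr \<tau>) \<partial>lebesgue) < \<infinity>" by (simp add: LV_def)
    have ge: "ennreal (real k) \<le> (\<integral>\<^sup>+ y. ennreal (V y * \<bar>u y\<bar> powr \<tau>) \<partial>lebesgue)" for k
    proof -
      have "(\<integral>\<^sup>+ y. ennreal (V y * \<bar>f k y\<bar> powr \<tau>) \<partial>lebesgue) \<le> (\<integral>\<^sup>+ y. ennreal (V y * \<bar>u y\<bar> powr \<tau>) \<partial>lebesgue)"
      proof (intro nn_integral_mono ennreal_leI mult_left_mono)
        fix y
        have "sum (\<lambda>j. f j y) {k} \<le> u y" unfolding u_def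
          by (rule sum_le_suminf[OF summ]) (use fnn in auto)
        then have "\<bar>f k y\<bar> \<le> \<bar>u y\<bar>" using fnn by simp
        then show "\<bar>f k y\<bar> powr \<tau> \<le> \<bar>u y\<bar> powr \<tau>" using tau by (intro powr_mono2) auto
        show "0 \<le> V y" using Vp by simp
      qed
      then show ?thesis using flow[rule_format, of k] by (rule order_trans[rotated])
    qed
    from fin obtain t where t: "(\<integral>\<^sup>+ y. ennreal (V y * \<bar>u y\<bar> powr \<tau>) \<partial>lebesgue) = ennreal t" "t \<ge> 0"
      by (cases "(\<integral>\<^sup>+ y. ennreal (V y * \<bar>u y\<bar> powr \<tau>) \<partial>lebesgue)" rule: ennreal_cases) auto
    have "ennreal (real (nat \<lceil>t\<rceil> + 1)) \<le> ennreal t" using ge[of "nat \<lceil>t\<rceil> + 1"] t by simp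
    then have "real (nat \<lceil>t\<rceil> + 1) \<le> t" using t(2) by (subst (asm) ennreal_le_iff) auto
    then show False by linarith
  qed
  show ?thesis using uH uL by blast
qed


lemma arith_upper:
  fixes r Vv m c2 a q A R \<omega> :: real and N :: nat
  assumes r: "r > 0" and Vv: "Vv = m\<^sup>2 / r\<^sup>2" and a2: "a\<^sup>2 = q / (A * R)"
    and A: "A = (4 + c2 * m\<^sup>2) * \<omega>" and R: "R = r ^ (N - 2)" and N: "N \<ge> 2"
    and om: "\<omega> > 0" and c2: "c2 > 0"
  shows "(4 * a\<^sup>2 / r\<^sup>2 + c2 * Vv * a\<^sup>2) * \<omega> * (r/2) ^ N \<le> q"
proof -
  have Rp: "R > 0" using R r by simp
  have Ap: "A > 0" using A om c2 by (simp add: add_pos_nonneg)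
  have rN: "r ^ N = R * r\<^sup>2" using R N by (metis le_add_diff_inverse2 power_add)
  have h: "(r/2) ^ N \<le> r ^ N" using r by (intro power_mono) auto
  have nn: "(4 * a\<^sup>2 / r\<^sup>2 + c2 * Vv * a\<^sup>2) * \<omega> \<ge> 0" using om c2 Vv r by simp
  have "(4 * a\<^sup>2 / r\<^sup>2 + c2 * Vv * a\<^sup>2) * \<omega> * (r/2) ^ N \<le> (4 * a\<^sup>2 / r\<^sup>2 + c2 * Vv * a\<^sup>2) * \<omega> * r ^ N"
    by (rule mult_left_mono[OF h nn])
  also have "\<dots> = A * a\<^sup>2 * R"
    unfolding rN Vv A using r by (simp add: field_simps)
  also have "\<dots> = q" unfolding a2 using Ap Rp by simp
  finally show ?thesis .
qed

lemma arith_lower: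
  fixes r Vv m c1 a q A R \<omega> \<delta> \<tau> B M T :: real and N :: nat
  assumes r: "r > 0" and Vv: "Vv = m\<^sup>2 / r\<^sup>2" and a2: "a\<^sup>2 = q / (A * R)" and a: "a > 0"
    and R: "R = r ^ (N - 2)" and N: "N \<ge> 2" and Ap: "A > 0" and q: "q > 0"
    and B: "B = c1 * m\<^sup>2 * \<delta> powr \<tau> * \<omega> / 8 ^ N" and Bp: "B > 0"
    and M: "M = K * A / (B * q)" and K: "K \<ge> 0"
    and T: "T = M powr (1 / (\<tau> - 2))" and aT: "a \<ge> T" and tau: "\<tau> > 2" and de: "\<delta> > 0"
  shows "K \<le> c1 * Vv * (a * \<delta>) powr \<tau> * \<omega> * (r/8) ^ N"
proof -
  have Rp: "R > 0" using R r by simp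
  have rN: "r ^ N = R * r\<^sup>2" using R N by (metis le_add_diff_inverse2 power_add)
  have Mnn: "M \<ge> 0" using M K Ap Bp q by simp
  have TM: "T powr (\<tau> - 2) = M"
  proof (cases "M = 0")
    case True then show ?thesis using T by simp
  next
    case False
    then show ?thesis using T Mnn tau by (simp add: powr_powr)
  qed
  have Tnn: "T \<ge> 0" using T by simp
  have aM: "a powr (\<tau> - 2) \<ge> M" using TM powr_mono2[of "\<tau> - 2" T a] tau Tnn aT by simp
  have pa: "a powr \<tau> = a powr (\<tau> - 2) * a\<^sup>2"
  proof -
    have "a powr \<tau> = a powr ((\<tau> - 2) + 2)" by simp
    also have "\<dots> = a powr (\<tau> - 2) * a powr 2" by (rule powr_add)
    also have "a powr 2 = a\<^sup>2" using a by (simp add: powr_numeral)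
    finally show ?thesis .
  qed
  have "(a * \<delta>) powr \<tau> = a powr (\<tau> - 2) * a\<^sup>2 * \<delta> powr \<tau>"
    using a de by (simp add: powr_mult pa)
  then have "c1 * Vv * (a * \<delta>) powr \<tau> * \<omega> * (r/8) ^ N = B * q / A * a powr (\<tau> - 2)"
    unfolding Vv B a2 using r Rp Ap by (simp add: rN power_divide field_simps)
  moreover have "B * q / A * M = K" unfolding M using Ap Bp q by simp
  moreover have "B * q / A * M \<le> B * q / A * a powr (\<tau> - 2)"
    using aM Ap Bp q by (intro mult_left_mono) auto
  ultimately show ?thesis by simp
qed


theorem theorem2p3:
  fixes V :: "'a::euclidean_space \<Rightarrow> real"
    and x :: "nat \<Rightarrow> 'a"
    and c1 c2 m :: real
  assumes "DIM('a) \<ge> 3"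
    and "continuous_on UNIV V"
    and "\<exists>c>0. \<forall>y. c \<le> V y"
    and "c1 > 0" and "c2 > 0" and "m > 0"
    and "filterlim (\<lambda>n. V (x n)) at_top sequentially"
    and "\<forall>n. \<forall>y\<in>ball (x n) (m / sqrt (V (x n))). c1 * V (x n) \<le> V y \<and> V y \<le> c2 * V (x n)"
  shows "\<forall>\<tau>>2. H1V V - LV V \<tau> \<noteq> {}"
proof (intro allI impI)
  fix \<tau> :: real assume tau: "\<tau> > 2"
  note Ndim = assms(1) and Vc = assms(2) and c1 = assms(4) and c2 = assms(5) and m = assms(6)
    and Vlim = assms(7) and Vball = assms(8)
  obtain cmin where cmin: "cmin > 0" "\<forall>y. cmin \<le> V y" using assms(3) by blast
  have Vp: "\<forall>y. V y \<ge> 0" using cmin by (meson less_le_trans less_imp_le)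
  define N where "N = DIM('a)"
  define \<omega> where "\<omega> = unit_ball_vol (real N)"
  have om: "\<omega> > 0" unfolding \<omega>_def by simp
  define \<delta> :: real where "\<delta> = exp (-5)"
  have de: "\<delta> > 0" unfolding \<delta>_def by simp
  define A where "A = (4 + c2 * m\<^sup>2) * \<omega>"
  have Ap: "A > 0" unfolding A_def using om c2 by (simp add: add_pos_nonneg)
  define B where "B = c1 * m\<^sup>2 * \<delta> powr \<tau> * \<omega> / 8 ^ N"
  have Bp: "B > 0" unfolding B_def using c1 m om de by simp
  define \<rho> where "\<rho> = m / sqrt cmin"
  define r where "r n = m / sqrt (V (x n))" for n
  define R where "R n = r n ^ (N - 2)" for n
  define M where "M k = real k * A / (B * (1/4)^k)" for k :: nat
  define T where "T k = M k powr (1 / (\<tau> - 2))" for k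
  define \<epsilon> where "\<epsilon> k = (1/4)^k / (A * (T k)\<^sup>2 + 1)" for k
  define aa where "aa k n = sqrt ((1/4)^k / (A * R n))" for k n
  have Vxp: "V (x n) > 0" for n using cmin by (meson less_le_trans)
  have rp: "r n > 0" for n unfolding r_def using m Vxp by simp
  have rle: "r n \<le> \<rho>" for n
    unfolding r_def \<rho>_def using m cmin Vxp[of n] by (intro divide_left_mono real_sqrt_le_mono) auto
  have r2: "V (x n) = m\<^sup>2 / (r n)\<^sup>2" for n
    unfolding r_def using Vxp[of n] m by (simp add: power_divide)
  have Rp: "R n > 0" for n unfolding R_def using rp by simp
  have epos: "\<epsilon> k > 0" for k unfolding \<epsilon>_def using Ap by (simp add: add_nonneg_pos)
  have rlim: "r \<longlonglongrightarrow> 0"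
  proof -
    have "filterlim (\<lambda>n. sqrt (V (x n))) at_top sequentially"
      by (rule filterlim_compose[OF sqrt_at_top Vlim])
    then have "filterlim (\<lambda>n. sqrt (V (x n))) at_infinity sequentially"
      by (rule filterlim_at_top_imp_at_infinity)
    then show ?thesis unfolding r_def[abs_def] by (intro tendsto_divide_0[OF tendsto_const])
  qed
  have Rlim: "R \<longlonglongrightarrow> 0"
  proof -
    have "(\<lambda>n. r n ^ (N - 2)) \<longlonglongrightarrow> 0 ^ (N - 2)" by (intro tendsto_power rlim)
    moreover have "(0::real) ^ (N - 2) = 0" using Ndim unfolding N_def by simp
    moreover have "R = (\<lambda>n. r n ^ (N - 2))" unfolding R_def by (rule ext) simp
    ultimately show ?thesis by (simp only:)
  qed
  have normlim: "\<forall>\<^sub>F n in sequentially. norm (x n) \<ge> Rad" for Rad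
  proof -
    have "compact (V ` cball 0 Rad)"
      by (intro compact_continuous_image continuous_on_subset[OF Vc]) auto
    then have "bounded (V ` cball 0 Rad)" by (rule compact_imp_bounded)
    then obtain Mb where Mb: "\<forall>z\<in>V ` cball 0 Rad. norm z \<le> Mb"
      unfolding bounded_iff by blast
    have "\<forall>\<^sub>F n in sequentially. V (x n) > Mb"
      using Vlim by (simp add: filterlim_at_top_dense)
    then show ?thesis
    proof (rule eventually_mono)
      fix n assume "V (x n) > Mb"
      have "x n \<notin> cball 0 Rad"
      proof
        assume "x n \<in> cball 0 Rad"
        then have "norm (V (x n)) \<le> Mb" using Mb by blast
        then show False using \<open>V (x n) > Mb\<close> by simp
      qed
      then show "norm (x n) \<ge> Rad" by simp
    qed
  qed
  have "\<forall>k. \<exists>n. norm (x n) \<ge> real k + \<rho> \<and> R n \<le> \<epsilon> k"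
  proof
    fix k
    have "\<forall>\<^sub>F n in sequentially. norm (x n) \<ge> real k + \<rho> \<and> R n \<le> \<epsilon> k"
      using normlim[of "real k + \<rho>"] order_tendstoD(2)[OF Rlim epos[of k]]
      by eventually_elim auto
    then obtain N0 where "\<forall>n\<ge>N0. norm (x n) \<ge> real k + \<rho> \<and> R n \<le> \<epsilon> k"
      unfolding eventually_sequentially by blast
    then show "\<exists>n. norm (x n) \<ge> real k + \<rho> \<and> R n \<le> \<epsilon> k" by blast
  qed
  from choice[OF this] obtain nk where nk: "\<forall>k. norm (x (nk k)) \<ge> real k + \<rho> \<and> R (nk k) \<le> \<epsilon> k" by blast
  define c where "c k = x (nk k)" for k
  define rr where "rr k = r (nk k)" for k
  define a where "a k = aa k (nk k)" for k
  define f where "f k = (\<lambda>y. a k * psi (c k) (rr k) y)" for k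
  have ap: "a k > 0" for k unfolding a_def aa_def using Ap Rp by simp
  have a2: "(a k)\<^sup>2 = (1/4)^k / (A * R (nk k))" for k
    unfolding a_def aa_def using Ap Rp[of "nk k"] by simp
  have fS: "\<forall>k. f k \<in> SC" unfolding f_def by (simp add: psi_SC)
  have fnn: "\<forall>k y. f k y \<ge> 0"
    unfolding f_def psi_def using ap gb_bounds(1) by (simp add: less_imp_le)
  have fb: "\<forall>k. normV_sq V (f k) \<le> ennreal ((1/4)^k)"
  proof
    fix k
    have VK: "\<forall>y\<in>cball (c k) (rr k / 2). V y \<le> c2 * V (c k)"
    proof
      fix y assume "y \<in> cball (c k) (rr k / 2)"
      then have "y \<in> ball (x (nk k)) (m / sqrt (V (x (nk k))))"
        using rp[of "nk k"] unfolding c_def rr_def r_def by auto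
      then show "V y \<le> c2 * V (c k)" using Vball unfolding c_def by blast
    qed
    have rk: "rr k > 0" unfolding rr_def by (rule rp)
    have K: "c2 * V (c k) \<ge> 0" using c2 Vp by simp
    have N2: "N \<ge> 2" using Ndim unfolding N_def by simp
    have "normV_sq V (f k) \<le> ennreal ((4 * (a k)\<^sup>2 / (rr k)\<^sup>2 + c2 * V (c k) * (a k)\<^sup>2) * unit_ball_vol DIM('a) * (rr k / 2) ^ DIM('a))"
      unfolding f_def by (rule apsi_normV[OF rk Vp VK K])
    also have "\<dots> \<le> ennreal ((1/4)^k)"
    proof (rule ennreal_leI)
      have au: "(4 * (a k)\<^sup>2 / (r (nk k))\<^sup>2 + c2 * V (x (nk k)) * (a k)\<^sup>2) * \<omega> * (r (nk k) / 2) ^ N \<le> (1/4)^k"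
        by (rule arith_upper[OF rp[of "nk k"] r2[of "nk k"] a2[of k] A_def R_def N2 om c2])
      then show "(4 * (a k)\<^sup>2 / (rr k)\<^sup>2 + c2 * V (c k) * (a k)\<^sup>2) * unit_ball_vol DIM('a) * (rr k / 2) ^ DIM('a) \<le> (1/4)^k"
        unfolding rr_def c_def \<omega>_def N_def .
    qed
    finally show "normV_sq V (f k) \<le> ennreal ((1/4)^k)" .
  qed
  have fsupp: "\<forall>k y. f k y \<noteq> 0 \<longrightarrow> real k < norm y \<and> dist (c k) y < \<rho>"
  proof (intro allI impI)
    fix k y assume fk: "f k y \<noteq> 0"
    have rk: "rr k > 0" unfolding rr_def by (rule rp)
    have "psi (c k) (rr k) y \<noteq> 0" using fk unfolding f_def by simp
    then have ph: "phi (c k) (rr k) y > 0" unfolding psi_def gb_eq by (cases "phi (c k) (rr k) y > 0") simp_all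
    define D where "D = (dist (c k) y)\<^sup>2"
    have "phi (c k) (rr k) y = 1/4 - inverse ((rr k)^2) * D" unfolding phi_def D_def inner_dist by simp
    then have i: "inverse ((rr k)^2) * D < 1/4" using ph by linarith
    have "D = (rr k)^2 * (inverse ((rr k)^2) * D)" using rk by simp
    also have "\<dots> < (rr k)^2 * (1/4)" using rk i by (intro mult_strict_left_mono) auto
    finally have "(dist (c k) y)\<^sup>2 < (rr k / 2)\<^sup>2" unfolding D_def by (simp add: power_divide)
    then have "dist (c k) y < rr k / 2"
      by (rule power2_less_imp_less) (use rk in simp)
    then have d: "dist (c k) y < \<rho>" using rle[of "nk k"] rp[of "nk k"] unfolding rr_def by linarith
    have "norm (c k) \<le> norm y + dist (c k) y" using norm_triangle_sub[of "c k" y] by (simp add: dist_norm)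
    moreover have "norm (c k) \<ge> real k + \<rho>" using nk unfolding c_def by blast
    ultimately show "real k < norm y \<and> dist (c k) y < \<rho>" using d by linarith
  qed
  have flow: "\<forall>k. ennreal (real k) \<le> (\<integral>\<^sup>+ y. ennreal (V y * \<bar>f k y\<bar> powr \<tau>) \<partial>lebesgue)"
  proof
    fix k
    have VL: "\<forall>y\<in>cball (c k) (rr k / 8). V y \<ge> c1 * V (c k)"
    proof
      fix y assume "y \<in> cball (c k) (rr k / 8)"
      then have "y \<in> ball (x (nk k)) (m / sqrt (V (x (nk k))))"
        using rp[of "nk k"] unfolding c_def rr_def r_def by auto
      then show "V y \<ge> c1 * V (c k)" using Vball unfolding c_def by blast
    qed
    have Tle: "T k \<le> a k"
    proof -
      have e1: "\<epsilon> k \<le> (1/4)^k / (A * (T k)\<^sup>2)" if "T k > 0"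
      proof -
        have p: "A * (T k)\<^sup>2 > 0" using that Ap by simp
        then have "(A * (T k)\<^sup>2 + 1) * (A * (T k)\<^sup>2) > 0" by simp
        then show ?thesis unfolding \<epsilon>_def by (intro divide_left_mono) auto
      qed
      show ?thesis
      proof (cases "T k > 0")
        case False then show ?thesis using ap[of k] by linarith
      next
        case True
        have "R (nk k) \<le> (1/4)^k / (A * (T k)\<^sup>2)" using nk e1[OF True] by (meson order_trans)
        then have "(T k)\<^sup>2 \<le> (1/4)^k / (A * R (nk k))" using True Ap Rp[of "nk k"]
          by (simp add: field_simps)
        then have "(T k)\<^sup>2 \<le> (a k)\<^sup>2" using a2 by simp
        then show ?thesis using ap[of k] by (simp add: abs_le_square_iff power2_le_iff_abs_le less_imp_le)
      qed
    qed
    have l1: "ennreal (c1 * V (c k) * (a k * exp (-5)) powr \<tau> * unit_ball_vol DIM('a) * (rr k / 8) ^ DIM('a))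
        \<le> (\<integral>\<^sup>+ y. ennreal (V y * \<bar>a k * psi (c k) (rr k) y\<bar> powr \<tau>) \<partial>lebesgue)"
      using rp Vp VL c1 Vxp tau ap unfolding rr_def c_def
      by (intro apsi_lower) (auto intro: less_imp_le)
    have l2: "real k \<le> c1 * V (c k) * (a k * exp (-5)) powr \<tau> * unit_ball_vol DIM('a) * (rr k / 8) ^ DIM('a)"
      using arith_lower[OF rp[of "nk k"] r2[of "nk k"] a2[of k] ap[of k] R_def _ Ap _ B_def Bp M_def _ T_def Tle tau de] Ndim
      unfolding rr_def c_def \<omega>_def N_def \<delta>_def by simp
    show "ennreal (real k) \<le> (\<integral>\<^sup>+ y. ennreal (V y * \<bar>f k y\<bar> powr \<tau>) \<partial>lebesgue)"
      unfolding f_def by (rule order_trans[OF ennreal_leI[OF l2] l1])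
  qed
  show "H1V V - LV V \<tau> \<noteq> {}"
    by (rule main_construction[OF Vc Vp fS fb fnn fsupp flow]) (use tau in simp)
qed


end
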